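(* Let $r_{\mathrm c}>0$, let $w_{\mathrm c}(\lambda)=\sqrt{\lambda(\lambda-4r_{\mathrm c})}$ be the branch analytic in $|\lambda|>4r_{\mathrm c}$ with $w_{\mathrm c}\sim\lambda$ at infinity, let $I\subset\mathbb{R}$ be an open interval, and for $j\ge 1$ let $f_j(\lambda)=(\lambda-4r_{\mathrm c})/\lambda^{j}$ and $g_j(\lambda)=\lambda/(\lambda-4r_{\mathrm c})^{j}$. Let $\mathfrak a(\bar\epsilon,x)=r_{\mathrm c}+\sum_{k\ge1}\mathfrak a_k(x)\bar\epsilon^k$ with $\mathfrak a_k\in C^\infty(I)$, and let $\mathbb V(\lambda,\bar\epsilon;x)=\sum_{k\ge0}\mathbb V^{[k]}(\lambda,x)\bar\epsilon^k$ with $\mathbb V^{[0]}=\lambda/w_{\mathrm c}$ satisfy, as formal power series in $\bar\epsilon$, $$\mathfrak a(\bar\epsilon,x)\big(\mathbb V(\lambda,\bar\epsilon;x)+\mathbb V(\lambda,-\bar\epsilon;x-\bar\epsilon)\big)\big(\mathbb V(\lambda,\bar\epsilon;x)+\mathbb V(\lambda,-\bar\epsilon;x+\bar\epsilon)\big)=\lambda\big(\mathbb V(\lambda,\bar\epsilon;x)^2-1\big).$$ Suppose moreover that $$\mathbb V=\frac{1}{w_{\mathrm c}}\Big(\lambda+\mathbb V_0+\sum_{j\ge1}\big(f_j(\lambda)\mathbb V_0^{[j]}+g_j(\lambda)\mathbb V_1^{[j]}\big)\Big),$$ where $\mathbb V_0(\bar\epsilon;x)$, $\mathbb V_0^{[j]}(\bar\epsilon;x)$,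 $\mathbb V_1^{[j]}(\bar\epsilon;x)$ are $\lambda$-independent formal power series in $\bar\epsilon$ with $C^\infty(I)$ coefficients, $\mathbb V_0=O(\bar\epsilon)$ and $\mathbb V_0^{[j]},\mathbb V_1^{[j]}=O(\bar\epsilon^{2j})$. Writing $y=x-\bar\epsilon/2$ and $y'=x-3\bar\epsilon/2$, the following formal series in $\bar\epsilon$ are even functions of $\bar\epsilon$ (for every $j\ge1$ where $j$ appears): $$\mathbb V_0(\bar\epsilon;y)+\mathbb V_0^{[1]}(\bar\epsilon;y)+\mathbb V_1^{[1]}(\bar\epsilon;y)-2\mathfrak a(\bar\epsilon,y),$$ $$4r_{\mathrm c}\mathbb V_0^{[1]}(\bar\epsilon;y)+\mathfrak a(\bar\epsilon,y)\big[\mathbb V_0(\bar\epsilon;y)+\mathbb V_0(-\bar\epsilon;y')\big],$$ $$\mathbb V_0^{[j+1]}(\bar\epsilon;y)-\mathfrak a(\bar\epsilon,y)\big[\mathbb V_0^{[j]}(\bar\epsilon;y)+\mathbb V_0^{[j]}(-\bar\epsilon;y')\big],$$ $$4r_{\mathrm c}\mathbb V_1^{[j]}(\bar\epsilon;y)+\mathbb V_1^{[j+1]}(\bar\epsilon;y)-\mathfrak a(\bar\epsilon,y)\big[\mathbb V_1^{[j]}(\bar\epsilon;y)+\mathbb V_1^{[j]}(-\bar\epsilon;y')\big].$$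
   Context: Shifted and sign-reversed series are understood formally: for $F(\bar\epsilon;x)=\sum_kF_k(x)\bar\epsilon^k$ and constants $c$, $F(\pm\bar\epsilon;x+c\bar\epsilon)=\sum_{k,n}(\pm1)^kF_k^{(n)}(x)c^n\bar\epsilon^{k+n}/n!$. "Even function of $\bar\epsilon$" means that all coefficients of odd powers of $\bar\epsilon$ vanish. The condition $\mathbb V_0^{[j]},\mathbb V_1^{[j]}=O(\bar\epsilon^{2j})$ makes each coefficient of $\bar\epsilon^k$ in the representation of $\mathbb V$ a finite sum. *)

theory Defs
  imports "HOL-Analysis.Analysis"
begin

text \<open>Formal power series in the small parameter are represented by their coefficient
  sequences.  A series whose coefficients depend on x is a map nat => real => 'a.\<close>

definition vderiv :: "(real \<Rightarrow> 'a::real_normed_vector) \<Rightarrow> real \<Rightarrow> 'a" where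
  "vderiv f = (\<lambda>x. vector_derivative f (at x))"

definition smooth_on :: "real set \<Rightarrow> (real \<Rightarrow> 'a::real_normed_vector) \<Rightarrow> bool" where
  "smooth_on I f \<longleftrightarrow> (\<forall>n. \<forall>x\<in>I. (vderiv ^^ n) f differentiable (at x))"

text \<open>Formal shift / sign reversal: coefficient sequence of F(sigma*eps; x + c*eps), namely
  coefficient of eps^k is sum over n <= k of sigma^(k-n) F_(k-n)^(n)(x) c^n / n!.\<close>
definition sshift :: "real \<Rightarrow> real \<Rightarrow> (nat \<Rightarrow> real \<Rightarrow> 'a::real_normed_vector) \<Rightarrow> nat \<Rightarrow> real \<Rightarrow> 'a" where
  "sshift \<sigma> c F k x = (\<Sum>n\<le>k. (\<sigma> ^ (k - n) * c ^ n / fact n) *\<^sub>R (vderiv ^^ n) (F (k - n)) x)"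

definition cprod :: "(nat \<Rightarrow> 'a::comm_ring) \<Rightarrow> (nat \<Rightarrow> 'a) \<Rightarrow> nat \<Rightarrow> 'a" where
  "cprod s t k = (\<Sum>i\<le>k. s i * t (k - i))"

definition even_series :: "(nat \<Rightarrow> 'a::zero) \<Rightarrow> bool" where
  "even_series s \<longleftrightarrow> (\<forall>k. odd k \<longrightarrow> s k = 0)"

text \<open>The branch of sqrt(lambda (lambda - 4 r)) analytic in |lambda| > 4 r with w ~ lambda
  at infinity (principal square root of 1 - 4r/lambda, which has positive real part there).\<close>
definition wc :: "real \<Rightarrow> complex \<Rightarrow> complex" where
  "wc r lam = lam * csqrt (1 - complex_of_real (4 * r) / lam)"

definition fj :: "real \<Rightarrow> nat \<Rightarrow> complex \<Rightarrow> complex" where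
  "fj r j lam = (lam - complex_of_real (4 * r)) / lam ^ j"

definition gj :: "real \<Rightarrow> nat \<Rightarrow> complex \<Rightarrow> complex" where
  "gj r j lam = lam / (lam - complex_of_real (4 * r)) ^ j"

end

theory Submission
  imports Defs "HOL-Complex_Analysis.Conformal_Mappings" "HOL-Computational_Algebra.Formal_Power_Series"
begin

lemma vderiv_Suc: "(vderiv ^^ Suc n) f = vderiv ((vderiv ^^ n) f)" by simp

lemma vderiv_add_n: "(vderiv ^^ n) ((vderiv ^^ m) f) = (vderiv ^^ (n + m)) f"
  by (simp add: funpow_add)

lemma vderiv_at: "(f has_vector_derivative D) (at x) \<Longrightarrow> vderiv f x = D"
  unfolding vderiv_def by (rule vector_derivative_at)

lemma hvd_eq_open:
  assumes "open I" "x \<in> I" "\<And>y. y \<in> I \<Longrightarrow> f y = g y"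
  shows "(f has_vector_derivative D) (at x) \<longleftrightarrow> (g has_vector_derivative D) (at x)"
  using has_vector_derivative_transform_within_open[of f D x I g]
        has_vector_derivative_transform_within_open[of g D x I f] assms by auto

lemma vderiv_eq_open:
  assumes "open I" "x \<in> I" "\<And>y. y \<in> I \<Longrightarrow> f y = g y"
  shows "vderiv f x = vderiv g x"
  unfolding vderiv_def vector_derivative_def using hvd_eq_open[OF assms] by simp

lemma diff_eq_open:
  assumes "open I" "x \<in> I" "\<And>y. y \<in> I \<Longrightarrow> f y = g y" "f differentiable (at x)"
  shows "g differentiable (at x)"
  using assms has_derivative_transform_within_open unfolding differentiable_def by blast

lemma D_eq_open:
  assumes "open I" "\<And>y. y \<in> I \<Longrightarrow> f y = g y" "x \<in> I"
  shows "(vderiv ^^ n) f x = (vderiv ^^ n) g x"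
  using assms(3)
proof (induction n arbitrary: x)
  case 0 then show ?case using assms by simp
next
  case (Suc n)
  then show ?case using vderiv_eq_open[OF assms(1) Suc.prems, of "(vderiv ^^ n) f" "(vderiv ^^ n) g"]
    by simp
qed

lemma smooth_eq_open:
  assumes "open I" "smooth_on I f" "\<And>y. y \<in> I \<Longrightarrow> f y = g y"
  shows "smooth_on I g"
  unfolding smooth_on_def
proof (intro allI ballI)
  fix n x assume x: "x \<in> I"
  have "(vderiv ^^ n) f differentiable (at x)" using assms(2) x by (simp add: smooth_on_def)
  then show "(vderiv ^^ n) g differentiable (at x)"
    using diff_eq_open[OF assms(1) x, of "(vderiv ^^ n) f" "(vderiv ^^ n) g"] D_eq_open[of I f g, OF assms(1) assms(3)] by blast
qed

lemma smooth_D: "smooth_on I f \<Longrightarrow> smooth_on I ((vderiv ^^ m) f)"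
  unfolding smooth_on_def by (simp add: vderiv_add_n)

lemma smooth_diff: "smooth_on I f \<Longrightarrow> x \<in> I \<Longrightarrow> ((vderiv ^^ n) f has_vector_derivative (vderiv ^^ Suc n) f x) (at x)"
  unfolding smooth_on_def vderiv_Suc by (simp add: vderiv_def vector_derivative_works[symmetric])

lemma smooth_diff0: "smooth_on I f \<Longrightarrow> x \<in> I \<Longrightarrow> (f has_vector_derivative vderiv f x) (at x)"
  using smooth_diff[of I f x 0] by simp

lemma D_linear:
  assumes "open I" "smooth_on I f" "bounded_linear L" "x \<in> I"
  shows "(vderiv ^^ n) (\<lambda>y. L (f y)) x = L ((vderiv ^^ n) f x)"
  using assms(4)
proof (induction n arbitrary: x)
  case 0 then show ?case by simp
next
  case (Suc n)
  have "(vderiv ^^ Suc n) (\<lambda>y. L (f y)) x = vderiv (\<lambda>y. L ((vderiv ^^ n) f y)) x"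
    using vderiv_eq_open[OF assms(1) Suc.prems, of "(vderiv ^^ n) (\<lambda>y. L (f y))"] Suc.IH by simp
  also have "\<dots> = L ((vderiv ^^ Suc n) f x)"
    by (rule vderiv_at, rule bounded_linear.has_vector_derivative[OF assms(3)],
        rule smooth_diff[OF assms(2) Suc.prems])
  finally show ?case .
qed

lemma smooth_linear:
  assumes "open I" "smooth_on I f" "bounded_linear L"
  shows "smooth_on I (\<lambda>y. L (f y))"
  unfolding smooth_on_def
proof (intro allI ballI)
  fix n x assume x: "x \<in> I"
  have "(\<lambda>y. L ((vderiv ^^ n) f y)) differentiable (at x)"
    using bounded_linear.has_vector_derivative[OF assms(3) smooth_diff[OF assms(2) x, of n]]
    unfolding has_vector_derivative_def differentiable_def by blast
  then show "(vderiv ^^ n) (\<lambda>y. L (f y)) differentiable (at x)"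
    using diff_eq_open[OF assms(1) x, of "\<lambda>y. L ((vderiv ^^ n) f y)"] D_linear[OF assms] by metis
qed

lemma D_add:
  assumes "open I" "smooth_on I f" "smooth_on I g" "x \<in> I"
  shows "(vderiv ^^ n) (\<lambda>y. f y + g y) x = (vderiv ^^ n) f x + (vderiv ^^ n) g x"
  using assms(4)
proof (induction n arbitrary: x)
  case 0 then show ?case by simp
next
  case (Suc n)
  have "(vderiv ^^ Suc n) (\<lambda>y. f y + g y) x = vderiv (\<lambda>y. (vderiv ^^ n) f y + (vderiv ^^ n) g y) x"
    using vderiv_eq_open[OF assms(1) Suc.prems, of "(vderiv ^^ n) (\<lambda>y. f y + g y)"] Suc.IH by simp
  also have "\<dots> = (vderiv ^^ Suc n) f x + (vderiv ^^ Suc n) g x"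
    by (rule vderiv_at, rule has_vector_derivative_add,
        (rule smooth_diff[OF _ Suc.prems], fact)+)
  finally show ?case .
qed

lemma smooth_add:
  assumes "open I" "smooth_on I f" "smooth_on I g"
  shows "smooth_on I (\<lambda>y. f y + g y)"
  unfolding smooth_on_def
proof (intro allI ballI)
  fix n x assume x: "x \<in> I"
  have "(\<lambda>y. (vderiv ^^ n) f y + (vderiv ^^ n) g y) differentiable (at x)"
    using has_vector_derivative_add[OF smooth_diff[OF assms(2) x, of n] smooth_diff[OF assms(3) x, of n]]
    unfolding has_vector_derivative_def differentiable_def by blast
  then show "(vderiv ^^ n) (\<lambda>y. f y + g y) differentiable (at x)"
    using diff_eq_open[OF assms(1) x, of "\<lambda>y. (vderiv ^^ n) f y + (vderiv ^^ n) g y"] D_add[OF assms] by metis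
qed

lemma D_const: "(vderiv ^^ n) (\<lambda>y. c) x = (if n = 0 then c else 0)"
proof (induction n arbitrary: x)
  case (Suc n)
  show ?case
  proof (cases n)
    case 0 then show ?thesis by (simp add: vderiv_def)
  next
    case (Suc m) then show ?thesis using Suc.IH by (simp add: vderiv_def)
  qed
qed simp

lemma vderiv_const_fun: "vderiv (\<lambda>y. c) = (\<lambda>x. 0)"
  by (rule ext) (simp add: vderiv_def)

lemma smooth_const: "smooth_on I (\<lambda>y. c)"
  unfolding smooth_on_def
proof (intro allI ballI)
  fix n x
  have "(vderiv ^^ n) (\<lambda>y. c) = (\<lambda>y. if n = 0 then c else 0)"
    by (rule ext) (simp add: D_const)
  then show "(vderiv ^^ n) (\<lambda>y. c) differentiable (at x)" by simp
qed

lemma D_sum: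
  assumes "open I" "finite A" "\<And>i. i \<in> A \<Longrightarrow> smooth_on I (f i)" "x \<in> I"
  shows "(vderiv ^^ n) (\<lambda>y. \<Sum>i\<in>A. f i y) x = (\<Sum>i\<in>A. (vderiv ^^ n) (f i) x)
     \<and> smooth_on I (\<lambda>y. \<Sum>i\<in>A. f i y)"
  using assms(2,3)
proof (induction A rule: finite_induct)
  case empty then show ?case by (simp add: D_const smooth_const)
next
  case (insert a A)
  have s: "smooth_on I (\<lambda>y. \<Sum>i\<in>A. f i y)" using insert by auto
  have fa: "smooth_on I (f a)" using insert by auto
  show ?case using insert D_add[OF assms(1) fa s assms(4)] smooth_add[OF assms(1) fa s] by simp
qed

lemma pascal_sum:
  fixes P :: "nat \<Rightarrow> nat \<Rightarrow> complex"
  shows "(\<Sum>i\<le>n. of_nat (n choose i) * (P i (Suc (n - i)) + P (Suc i) (n - i)))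
       = (\<Sum>i\<le>Suc n. of_nat (Suc n choose i) * P i (Suc n - i))"
proof -
  have e1: "(\<Sum>i\<le>Suc n. of_nat (Suc n choose i) * P i (Suc n - i))
      = P 0 (Suc n) + (\<Sum>i\<le>n. of_nat (n choose i) * P (Suc i) (n - i))
                    + (\<Sum>i\<le>n. of_nat (n choose Suc i) * P (Suc i) (n - i))"
    by (subst sum.atMost_Suc_shift) (simp add: algebra_simps sum.distrib)
  have e2: "(\<Sum>i\<le>n. of_nat (n choose i) * P i (Suc (n - i)))
      = P 0 (Suc n) + (\<Sum>i\<le>n. of_nat (n choose Suc i) * P (Suc i) (n - i))"
  proof -
    have a: "(\<Sum>i\<le>n. of_nat (n choose i) * P i (Suc (n - i)))
        = (\<Sum>i<Suc n. of_nat (n choose i) * P i (Suc n - i))"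
      by (rule sum.cong) (auto simp: Suc_diff_le lessThan_Suc_atMost)
    have b: "(\<Sum>i<Suc n. of_nat (n choose i) * P i (Suc n - i)) = P 0 (Suc n) + (\<Sum>i<n. of_nat (n choose Suc i) * P (Suc i) (n - i))"
      by (subst sum.lessThan_Suc_shift) simp
    have c: "(\<Sum>i<n. of_nat (n choose Suc i) * P (Suc i) (n - i))
             = (\<Sum>i\<le>n. of_nat (n choose Suc i) * P (Suc i) (n - i))"
      by (simp add: lessThan_Suc_atMost[symmetric])
    show ?thesis using a b c by (simp only:)
  qed
  have e3: "(\<Sum>i\<le>n. of_nat (n choose i) * (P i (Suc (n - i)) + P (Suc i) (n - i)))
     = (\<Sum>i\<le>n. of_nat (n choose i) * P i (Suc (n - i))) + (\<Sum>i\<le>n. of_nat (n choose i) * P (Suc i) (n - i))"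
    by (simp add: distrib_left sum.distrib)
  show ?thesis unfolding e1 e3 e2 by (simp only: ac_simps)
qed

lemma D_mult:
  fixes f g :: "real \<Rightarrow> complex"
  assumes "open I" "smooth_on I f" "smooth_on I g" "x \<in> I"
  shows "(vderiv ^^ n) (\<lambda>y. f y * g y) x
       = (\<Sum>i\<le>n. of_nat (n choose i) * ((vderiv ^^ i) f x * (vderiv ^^ (n - i)) g x))"
  using assms(4)
proof (induction n arbitrary: x)
  case 0 then show ?case by simp
next
  case (Suc n)
  have "(vderiv ^^ Suc n) (\<lambda>y. f y * g y) x
      = vderiv (\<lambda>y. \<Sum>i\<le>n. of_nat (n choose i) * ((vderiv ^^ i) f y * (vderiv ^^ (n - i)) g y)) x"
    using vderiv_eq_open[OF assms(1) Suc.prems, of "(vderiv ^^ n) (\<lambda>y. f y * g y)"] Suc.IH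
    by (simp only: funpow.simps o_apply)
  also have "\<dots> = (\<Sum>i\<le>n. of_nat (n choose i) * ((vderiv ^^ i) f x * (vderiv ^^ Suc (n - i)) g x
                 + (vderiv ^^ Suc i) f x * (vderiv ^^ (n - i)) g x))"
    apply (rule vderiv_at, rule has_vector_derivative_sum, rule has_vector_derivative_mult_right)
    apply (rule has_vector_derivative_mult)
     apply (rule smooth_diff[OF assms(2) Suc.prems])
    apply (rule smooth_diff[OF assms(3) Suc.prems])
    done
  also have "\<dots> = (\<Sum>i\<le>Suc n. of_nat (Suc n choose i) * ((vderiv ^^ i) f x * (vderiv ^^ (Suc n - i)) g x))"
    by (rule pascal_sum[of n "\<lambda>i j. (vderiv ^^ i) f x * (vderiv ^^ j) g x"])
  finally show ?case .
qed

lemma smooth_mult: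
  fixes f g :: "real \<Rightarrow> complex"
  assumes "open I" "smooth_on I f" "smooth_on I g"
  shows "smooth_on I (\<lambda>y. f y * g y)"
  unfolding smooth_on_def
proof (intro allI ballI)
  fix n x assume x: "x \<in> I"
  have d: "(\<lambda>y. \<Sum>i\<le>n. of_nat (n choose i) * ((vderiv ^^ i) f y * (vderiv ^^ (n - i)) g y)) differentiable (at x)"
  proof -
    have "((\<lambda>y. \<Sum>i\<le>n. of_nat (n choose i) * ((vderiv ^^ i) f y * (vderiv ^^ (n - i)) g y)) has_vector_derivative
       (\<Sum>i\<le>n. of_nat (n choose i) * ((vderiv ^^ i) f x * (vderiv ^^ Suc (n - i)) g x
                 + (vderiv ^^ Suc i) f x * (vderiv ^^ (n - i)) g x))) (at x)"
      apply (rule has_vector_derivative_sum, rule has_vector_derivative_mult_right)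
      apply (rule has_vector_derivative_mult)
       apply (rule smooth_diff[OF assms(2) x])
      apply (rule smooth_diff[OF assms(3) x])
      done
    then show ?thesis unfolding has_vector_derivative_def differentiable_def by blast
  qed
  show "(vderiv ^^ n) (\<lambda>y. f y * g y) differentiable (at x)"
  proof (rule diff_eq_open[OF assms(1) x _ d])
    fix y assume "y \<in> I" then show "(\<Sum>i\<le>n. of_nat (n choose i) * ((vderiv ^^ i) f y * (vderiv ^^ (n - i)) g y))
        = (vderiv ^^ n) (\<lambda>y. f y * g y) y" by (simp only: D_mult[OF assms])
  qed
qed

lemma sshift_local:
  assumes "open I" "x \<in> I" "\<And>m y. m \<le> k \<Longrightarrow> y \<in> I \<Longrightarrow> F m y = G m y"
  shows "sshift \<sigma> c F k x = sshift \<sigma> c G k x"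
  unfolding sshift_def
  by (rule sum.cong[OF refl]) (simp add: D_eq_open[OF assms(1) _ assms(2), of "F _" "G _"] assms(3))

lemma sshift_add:
  assumes "open I" "x \<in> I" "\<And>m. smooth_on I (F m)" "\<And>m. smooth_on I (G m)"
  shows "sshift \<sigma> c (\<lambda>m y. F m y + G m y) k x = sshift \<sigma> c F k x + sshift \<sigma> c G k x"
  unfolding sshift_def
  by (simp add: D_add[OF assms(1) assms(3) assms(4) assms(2)] scaleR_add_right sum.distrib)

lemma sshift_linear:
  assumes "open I" "x \<in> I" "\<And>m. smooth_on I (F m)" "bounded_linear L"
  shows "sshift \<sigma> c (\<lambda>m y. L (F m y)) k x = L (sshift \<sigma> c F k x)"
  unfolding sshift_def
  using assms(4)[THEN bounded_linear.linear]
  by (simp add: D_linear[OF assms(1) assms(3) assms(4) assms(2)] real_vector.linear_sum linear_cmul)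

lemma sshift_sum:
  assumes "open I" "x \<in> I" "finite A" "\<And>j m. j \<in> A \<Longrightarrow> smooth_on I (F j m)"
  shows "sshift \<sigma> c (\<lambda>m y. \<Sum>j\<in>A. F j m y) k x = (\<Sum>j\<in>A. sshift \<sigma> c (F j) k x)"
  unfolding sshift_def
  using D_sum[OF assms(1) assms(3) _ assms(2), of "\<lambda>j. F j _"] assms(4)
  by (simp add: scaleR_sum_right sum.swap[of _ A])

lemma sshift_const: "sshift \<sigma> c (\<lambda>m y. C m) k x = (\<sigma> ^ k) *\<^sub>R C k"
proof -
  have "sshift \<sigma> c (\<lambda>m y. C m) k x = (\<Sum>n\<le>k. if n = 0 then (\<sigma> ^ k) *\<^sub>R C k else 0)"
    unfolding sshift_def by (rule sum.cong) (auto simp: D_const)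
  also have "\<dots> = (\<sigma> ^ k) *\<^sub>R C k" by (simp add: sum.delta)
  finally show ?thesis .
qed

lemma sshift_zero:
  assumes "open I" "x \<in> I" "\<And>m y. m \<le> k \<Longrightarrow> y \<in> I \<Longrightarrow> F m y = 0"
  shows "sshift \<sigma> c F k x = 0"
  using sshift_local[OF assms(1,2), of k F "\<lambda>m y. 0"] assms(3) sshift_const[of \<sigma> c "\<lambda>m. 0"] by simp

lemma sshift_reflect:
  "sshift (-1) (1/2) F k x = ((-1) ^ k) *\<^sub>R sshift 1 (-1/2) F k x"
  unfolding sshift_def scaleR_sum_right
proof (rule sum.cong[OF refl])
  fix n assume "n \<in> {..k}"
  then have nk: "k - n + n = k" by simp
  have a: "(-1::real) ^ k = (-1) ^ (k - n) * (-1) ^ n"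
    by (subst nk[symmetric], subst power_add) simp
  have b: "(-1::real) ^ n * (-1) ^ n = 1"
    by (simp add: power_add[symmetric])
  have c: "(-1::real) ^ (k - n) = (-1) ^ k * (-1) ^ n"
    using a b by (metis mult.assoc mult_1_right)
  have d: "((-1::real) / 2) ^ n = (-1) ^ n * (1 / 2) ^ n"
    by (simp only: power_divide) simp
  have "((-1::real) ^ (k - n) * (1 / 2) ^ n / fact n) = (-1) ^ k * (1 ^ (k - n) * ((- 1) / 2) ^ n / fact n)"
    unfolding c d by simp
  then show "((-1) ^ (k - n) * (1 / 2) ^ n / fact n) *\<^sub>R (vderiv ^^ n) (F (k - n)) x =
         (- 1) ^ k *\<^sub>R (1 ^ (k - n) * (- 1 / 2) ^ n / fact n) *\<^sub>R (vderiv ^^ n) (F (k - n)) x"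
    by (simp only: scaleR_scaleR)
qed

lemma D_sshift:
  assumes "open I" "x \<in> I" "\<And>m. smooth_on I (F m)"
  shows "(vderiv ^^ p) (sshift \<sigma> c F k) x = sshift \<sigma> c (\<lambda>m. (vderiv ^^ p) (F m)) k x
     \<and> smooth_on I (sshift \<sigma> c F k)"
proof -
  have sm: "\<And>n. n \<in> {..k} \<Longrightarrow> smooth_on I (\<lambda>y. (\<sigma> ^ (k - n) * c ^ n / fact n) *\<^sub>R (vderiv ^^ n) (F (k - n)) y)"
    by (rule smooth_linear[OF assms(1) smooth_D[OF assms(3)] bounded_linear_scaleR_right])
  have e: "sshift \<sigma> c F k = (\<lambda>y. \<Sum>n\<le>k. (\<sigma> ^ (k - n) * c ^ n / fact n) *\<^sub>R (vderiv ^^ n) (F (k - n)) y)"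
    by (rule ext) (simp add: sshift_def)
  have ds: "(vderiv ^^ p) (\<lambda>y. \<Sum>n\<le>k. (\<sigma> ^ (k - n) * c ^ n / fact n) *\<^sub>R (vderiv ^^ n) (F (k - n)) y) x
      = (\<Sum>n\<le>k. (vderiv ^^ p) (\<lambda>y. (\<sigma> ^ (k - n) * c ^ n / fact n) *\<^sub>R (vderiv ^^ n) (F (k - n)) y) x)
     \<and> smooth_on I (\<lambda>y. \<Sum>n\<le>k. (\<sigma> ^ (k - n) * c ^ n / fact n) *\<^sub>R (vderiv ^^ n) (F (k - n)) y)"
    by (rule D_sum[OF assms(1) finite_atMost _ assms(2), where f="\<lambda>n y. (\<sigma> ^ (k - n) * c ^ n / fact n) *\<^sub>R (vderiv ^^ n) (F (k - n)) y"])
      (rule sm)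
  show ?thesis unfolding e
    using ds
    by (simp add: sshift_def D_linear[OF assms(1) smooth_D[OF assms(3)] bounded_linear_scaleR_right assms(2)]
           vderiv_add_n add.commute)
qed

lemma sum_tri:
  fixes k :: nat
  shows "(\<Sum>n\<le>k. \<Sum>p\<le>k - n. g n p) = (\<Sum>q\<le>k. \<Sum>n\<le>q. g n (q - n))"
proof -
  have "(\<Sum>n\<le>k. \<Sum>p\<le>k - n. g n p) = (\<Sum>(n,p)\<in>Sigma {..k} (\<lambda>n. {..k - n}). g n p)"
    using sum.Sigma[of "{..k}" "\<lambda>n. {..k - n}" "\<lambda>n p. g n p"] by simp
  also have "Sigma {..k} (\<lambda>n. {..k - n}) = {(i,j). i + j \<le> k}" by auto
  also have "(\<Sum>(n,p)\<in>{(i,j). i + j \<le> k}. g n p) = (\<Sum>q\<le>k. \<Sum>n\<le>q. g n (q - n))"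
    by (rule sum.triangle_reindex_eq)
  finally show ?thesis .
qed

lemma comp_coef:
  fixes \<sigma> \<sigma>' c c' :: real
  assumes "n \<le> q" "q \<le> k"
  shows "(\<sigma> ^ (k - n) * c ^ n / fact n) * (\<sigma>' ^ (k - n - (q - n)) * c' ^ (q - n) / fact (q - n))
    = (\<sigma> * \<sigma>') ^ (k - q) * (of_nat (q choose n) * c ^ n * (\<sigma> * c') ^ (q - n)) / fact q"
proof -
  have e1: "\<sigma> ^ (k - n) = \<sigma> ^ (k - q) * \<sigma> ^ (q - n)"
    using assms by (simp add: power_add[symmetric])
  have e2: "k - n - (q - n) = k - q" using assms by simp
  have e3: "(of_nat (q choose n) :: real) = fact q / (fact n * fact (q - n))"
    using binomial_fact[OF assms(1)] by simp
  show ?thesis unfolding e1 e2 e3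
    by (simp add: power_mult_distrib field_simps)
qed

lemma sshift_comp:
  assumes "open I" "x \<in> I" "\<And>m. smooth_on I (F m)"
  shows "sshift \<sigma> c (\<lambda>k. sshift \<sigma>' c' F k) k x = sshift (\<sigma> * \<sigma>') (c + \<sigma> * c') F k x"
proof -
  have "sshift \<sigma> c (\<lambda>k. sshift \<sigma>' c' F k) k x
      = (\<Sum>n\<le>k. (\<sigma> ^ (k - n) * c ^ n / fact n) *\<^sub>R sshift \<sigma>' c' (\<lambda>m. (vderiv ^^ n) (F m)) (k - n) x)"
    unfolding sshift_def[of \<sigma> c]
    by (rule sum.cong[OF refl]) (simp add: D_sshift[OF assms])
  also have "\<dots> = (\<Sum>n\<le>k. \<Sum>p\<le>k - n. ((\<sigma> ^ (k - n) * c ^ n / fact n) * (\<sigma>' ^ (k - n - p) * c' ^ p / fact p))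
                 *\<^sub>R (vderiv ^^ (p + n)) (F (k - n - p)) x)"
    unfolding sshift_def by (simp add: scaleR_sum_right vderiv_add_n)
  also have "\<dots> = (\<Sum>q\<le>k. \<Sum>n\<le>q. ((\<sigma> ^ (k - n) * c ^ n / fact n) * (\<sigma>' ^ (k - n - (q - n)) * c' ^ (q - n) / fact (q - n)))
                 *\<^sub>R (vderiv ^^ (q - n + n)) (F (k - n - (q - n))) x)"
    by (rule sum_tri)
  also have "\<dots> = (\<Sum>q\<le>k. \<Sum>n\<le>q. ((\<sigma> * \<sigma>') ^ (k - q) * (of_nat (q choose n) * c ^ n * (\<sigma> * c') ^ (q - n)) / fact q)
                 *\<^sub>R (vderiv ^^ q) (F (k - q)) x)"
  proof (intro sum.cong refl)
    fix q n assume q: "q \<in> {..k}" and n: "n \<in> {..q}"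
    then have "q - n + n = q" "k - n - (q - n) = k - q" by auto
    then show "((\<sigma> ^ (k - n) * c ^ n / fact n) * (\<sigma>' ^ (k - n - (q - n)) * c' ^ (q - n) / fact (q - n)))
                 *\<^sub>R (vderiv ^^ (q - n + n)) (F (k - n - (q - n))) x
       = ((\<sigma> * \<sigma>') ^ (k - q) * (of_nat (q choose n) * c ^ n * (\<sigma> * c') ^ (q - n)) / fact q)
                 *\<^sub>R (vderiv ^^ q) (F (k - q)) x"
      using comp_coef[of n q k \<sigma> c \<sigma>' c'] q n by simp
  qed
  also have "\<dots> = sshift (\<sigma> * \<sigma>') (c + \<sigma> * c') F k x"
    unfolding sshift_def binomial_ring
    by (simp add: scaleR_sum_left[symmetric] sum_divide_distrib sum_distrib_left)
  finally show ?thesis .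
qed

lemma sum_Sigma3:
  assumes "finite A" "\<And>n. n \<in> A \<Longrightarrow> finite (B n)" "\<And>n i. n \<in> A \<Longrightarrow> i \<in> B n \<Longrightarrow> finite (C n i)"
  shows "(\<Sum>n\<in>A. \<Sum>i\<in>B n. \<Sum>a\<in>C n i. f n i a) = (\<Sum>(n,i,a)\<in>(SIGMA n:A. SIGMA i:B n. C n i). f n i a)"
proof -
  have "(\<Sum>n\<in>A. \<Sum>i\<in>B n. \<Sum>a\<in>C n i. f n i a) = (\<Sum>n\<in>A. \<Sum>(i,a)\<in>(SIGMA i:B n. C n i). f n i a)"
    by (rule sum.cong[OF refl], rule sum.Sigma) (use assms in auto)
  also have "\<dots> = (\<Sum>(n,p)\<in>(SIGMA n:A. SIGMA i:B n. C n i). (\<lambda>(i,a). f n i a) p)"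
    by (rule sum.Sigma) (use assms in \<open>auto intro: finite_SigmaI\<close>)
  finally show ?thesis by (simp add: split_def)
qed

lemma prod_coef:
  fixes \<sigma> c :: real
  assumes "n \<le> k" "i \<le> k - n" "a \<le> n"
  shows "(\<sigma> ^ (k - n) * c ^ n / fact n) * of_nat (n choose a)
    = (\<sigma> ^ (a + i - a) * c ^ a / fact a) * (\<sigma> ^ (k - (a + i) - (n - a)) * c ^ (n - a) / fact (n - a))"
proof -
  have e1: "\<sigma> ^ (k - n) = \<sigma> ^ i * \<sigma> ^ (k - n - i)"
    using assms by (simp add: power_add[symmetric])
  have e2: "c ^ n = c ^ a * c ^ (n - a)"
    using assms by (simp add: power_add[symmetric])
  have e3: "(of_nat (n choose a) :: real) = fact n / (fact a * fact (n - a))"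
    using binomial_fact[OF assms(3)] by simp
  have e4: "k - (a + i) - (n - a) = k - n - i" "a + i - a = i" using assms by auto
  show ?thesis unfolding e1 e2 e3 e4
    by (simp add: field_simps)
qed

lemma sshift_cprod:
  fixes F G :: "nat \<Rightarrow> real \<Rightarrow> complex"
  assumes "open I" "x \<in> I" "\<And>m. smooth_on I (F m)" "\<And>m. smooth_on I (G m)"
  shows "sshift \<sigma> c (\<lambda>k y. cprod (\<lambda>k. F k y) (\<lambda>k. G k y) k) k x
       = cprod (\<lambda>k. sshift \<sigma> c F k x) (\<lambda>k. sshift \<sigma> c G k x) k"
proof -
  define h1 where "h1 = (\<lambda>(n, i, a). (\<sigma> ^ (k - n) * c ^ n / fact n) *\<^sub>R
        (of_nat (n choose a) * ((vderiv ^^ a) (F i) x * (vderiv ^^ (n - a)) (G (k - n - i)) x)))"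
  define h2 where "h2 = (\<lambda>(m, a, b). ((\<sigma> ^ (m - a) * c ^ a / fact a) * (\<sigma> ^ (k - m - b) * c ^ b / fact b)) *\<^sub>R
        ((vderiv ^^ a) (F (m - a)) x * (vderiv ^^ b) (G (k - m - b)) x))"
  have sm: "\<And>n i. smooth_on I (\<lambda>y. F i y * G (k - n - i) y)"
    by (rule smooth_mult[OF assms(1) assms(3) assms(4)])
  have "sshift \<sigma> c (\<lambda>k y. cprod (\<lambda>k. F k y) (\<lambda>k. G k y) k) k x
      = (\<Sum>n\<le>k. (\<sigma> ^ (k - n) * c ^ n / fact n) *\<^sub>R
          (\<Sum>i\<le>k - n. (vderiv ^^ n) (\<lambda>y. F i y * G (k - n - i) y) x))"
    unfolding sshift_def cprod_def
    by (rule sum.cong[OF refl], rule arg_cong[where f="\<lambda>z. _ *\<^sub>R z"])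
       (rule conjunct1[OF D_sum[OF assms(1) finite_atMost _ assms(2)]], rule sm)
  also have "\<dots> = (\<Sum>n\<le>k. \<Sum>i\<le>k - n. \<Sum>a\<le>n. h1 (n, i, a))"
    unfolding h1_def
    by (simp add: D_mult[OF assms(1) assms(3) assms(4) assms(2)] scaleR_sum_right)
  also have "\<dots> = (\<Sum>p\<in>(SIGMA n:{..k}. SIGMA i:{..k - n}. {..n}). h1 p)"
    by (subst sum_Sigma3) (auto simp: split_def)
  also have "\<dots> = (\<Sum>p\<in>(SIGMA m:{..k}. SIGMA a:{..m}. {..k - m}). h2 p)"
  proof (rule sum.reindex_bij_witness[where j="\<lambda>(n, i, a). (a + i, a, n - a)" and i="\<lambda>(m, a, b). (a + b, m - a, a)"])
    fix p assume "p \<in> (SIGMA n:{..k}. SIGMA i:{..k - n}. {..n})"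
    then obtain n i a where p: "p = (n, i, a)" "n \<le> k" "i \<le> k - n" "a \<le> n" by auto
    show "(case case p of (n, i, a) \<Rightarrow> (a + i, a, n - a) of (m, a, b) \<Rightarrow> (a + b, m - a, a)) = p"
      using p by auto
    show "(case p of (n, i, a) \<Rightarrow> (a + i, a, n - a)) \<in> (SIGMA m:{..k}. SIGMA a:{..m}. {..k - m})"
      using p by auto
    show "h2 (case p of (n, i, a) \<Rightarrow> (a + i, a, n - a)) = h1 p"
    proof -
      have idx: "k - (a + i) - (n - a) = k - n - i" "a + i - a = i" using p by auto
      define X where "X = (vderiv ^^ a) (F i) x * (vderiv ^^ (n - a)) (G (k - n - i)) x"
      have "(\<sigma> ^ (k - n) * c ^ n / fact n) *\<^sub>R (of_nat (n choose a) * X)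
          = ((\<sigma> ^ (k - n) * c ^ n / fact n) * of_nat (n choose a)) *\<^sub>R X"
        by (simp add: scaleR_conv_of_real)
      also have "\<dots> = ((\<sigma> ^ (a + i - a) * c ^ a / fact a) * (\<sigma> ^ (k - (a + i) - (n - a)) * c ^ (n - a) / fact (n - a))) *\<^sub>R X"
        by (simp only: prod_coef[OF p(2-4)])
      finally show ?thesis
        unfolding h1_def h2_def p(1) X_def by (simp only: idx split)
    qed
  next
    fix p assume "p \<in> (SIGMA m:{..k}. SIGMA a:{..m}. {..k - m})"
    then obtain m a b where p: "p = (m, a, b)" "m \<le> k" "a \<le> m" "b \<le> k - m" by auto
    show "(case case p of (m, a, b) \<Rightarrow> (a + b, m - a, a) of (n, i, a) \<Rightarrow> (a + i, a, n - a)) = p"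
      using p by auto
    show "(case p of (m, a, b) \<Rightarrow> (a + b, m - a, a)) \<in> (SIGMA n:{..k}. SIGMA i:{..k - n}. {..n})"
      using p by auto
  qed
  also have "\<dots> = (\<Sum>m\<le>k. \<Sum>a\<le>m. \<Sum>b\<le>k - m. h2 (m, a, b))"
    by (subst sum_Sigma3) (auto simp: split_def)
  also have "\<dots> = cprod (\<lambda>k. sshift \<sigma> c F k x) (\<lambda>k. sshift \<sigma> c G k x) k"
    unfolding cprod_def sshift_def h2_def
    by (simp add: sum_product mult_scaleR_left mult_scaleR_right mult_ac)
  finally show ?thesis .
qed

lemma smooth_cprod:
  fixes F G :: "nat \<Rightarrow> real \<Rightarrow> complex"
  assumes "open I" "\<And>m. smooth_on I (F m)" "\<And>m. smooth_on I (G m)"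
  shows "smooth_on I (\<lambda>y. cprod (\<lambda>k. F k y) (\<lambda>k. G k y) k)"
proof -
  obtain x where "True" by simp
  show ?thesis unfolding cprod_def
    unfolding smooth_on_def
  proof (intro allI ballI)
    fix n x assume x: "x \<in> I"
    have "smooth_on I (\<lambda>y. \<Sum>i\<le>k. F i y * G (k - i) y)"
      by (rule conjunct2[OF D_sum[OF assms(1) finite_atMost _ x]], rule smooth_mult[OF assms(1) assms(2) assms(3)])
    then show "(vderiv ^^ n) (\<lambda>y. \<Sum>i\<le>k. F i y * G (k - i) y) differentiable at x"
      using x unfolding smooth_on_def by blast
  qed
qed

lemma poly_vanish:
  fixes \<Psi> :: "complex \<Rightarrow> complex" and r :: real
  assumes "r > 0" "\<Psi> holomorphic_on UNIV" "\<And>z. cmod z > 4 * r \<Longrightarrow> \<Psi> z = 0"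
  shows "\<Psi> w = 0"
proof (rule analytic_continuation[of \<Psi> UNIV "{z. cmod z > 4 * r}" "of_real (5 * r)"])
  show "\<Psi> holomorphic_on UNIV" by fact
  show "connected (UNIV :: complex set)" by (rule connected_UNIV)
  have o: "open {z :: complex. cmod z > 4 * r}"
    by (intro open_Collect_less continuous_intros)
  show "of_real (5 * r) islimpt {z. cmod z > 4 * r}"
    by (rule open_imp_islimpt[OF o]) (use assms(1) in simp)
qed (use assms in auto)

lemma lam_unique:
  fixes r :: real and p q :: complex and u v :: "nat \<Rightarrow> complex"
  assumes r: "r > 0"
    and h: "\<And>z. cmod z > 4 * r \<Longrightarrow> p * z + q + (\<Sum>j\<in>{1..n}. fj r j z * u j + gj r j z * v j) = 0"
  shows "p = 0 \<and> q = 0 \<and> (\<forall>j\<in>{1..n}. u j = 0 \<and> v j = 0)"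
  using h
proof (induction n)
  case 0
  have "p * of_real (5 * r) + q = 0" "p * of_real (6 * r) + q = 0"
    using 0[of "of_real (5 * r)"] 0[of "of_real (6 * r)"] r by auto
  then have "p * of_real r = 0"
  proof -
    assume a: "p * of_real (5 * r) + q = 0" "p * of_real (6 * r) + q = 0"
    have "p * of_real r = (p * of_real (6 * r) + q) - (p * of_real (5 * r) + q)"
      by (simp add: algebra_simps)
    also have "\<dots> = 0" by (simp only: a) simp
    finally show ?thesis .
  qed
  then show ?case using r \<open>p * of_real (5 * r) + q = 0\<close> by auto
next
  case (Suc n)
  define N where "N = Suc n"
  define R where "R = complex_of_real (4 * r)"
  have R0: "R \<noteq> 0" using r by (simp add: R_def)
  define \<Psi> where "\<Psi> = (\<lambda>z. z ^ N * (z - R) ^ N * (p * z + q)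
      + (\<Sum>j\<in>{1..N}. u j * ((z - R) ^ (N + 1) * z ^ (N - j)) + v j * (z ^ (N + 1) * (z - R) ^ (N - j))))"
  have hol: "\<Psi> holomorphic_on UNIV" unfolding \<Psi>_def by (intro holomorphic_intros)
  have van: "\<Psi> z = 0" if z: "cmod z > 4 * r" for z
  proof -
    have z0: "z \<noteq> 0" using z r by auto
    have zR: "z - R \<noteq> 0"
    proof
      assume "z - R = 0" then have "z = R" by simp
      then show False using z r by (simp add: R_def)
    qed
    have fj: "z ^ N * (z - R) ^ N * fj r j z = (z - R) ^ (N + 1) * z ^ (N - j)" if "j \<in> {1..N}" for j
    proof -
      have "z ^ N = z ^ (N - j) * z ^ j" using that by (simp add: power_add[symmetric])
      then show ?thesis unfolding fj_def R_def[symmetric] using z0 by (simp add: field_simps)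
    qed
    have gj: "z ^ N * (z - R) ^ N * gj r j z = z ^ (N + 1) * (z - R) ^ (N - j)" if "j \<in> {1..N}" for j
    proof -
      have "(z - R) ^ N = (z - R) ^ (N - j) * (z - R) ^ j" using that by (simp add: power_add[symmetric])
      then show ?thesis unfolding gj_def R_def[symmetric] using zR by (simp add: field_simps)
    qed
    have s: "(\<Sum>j\<in>{1..N}. z ^ N * (z - R) ^ N * (fj r j z * u j + gj r j z * v j))
       = (\<Sum>j\<in>{1..N}. u j * ((z - R) ^ (N + 1) * z ^ (N - j)) + v j * (z ^ (N + 1) * (z - R) ^ (N - j)))"
    proof (rule sum.cong[OF refl])
      fix j assume j: "j \<in> {1..N}"
      have "z ^ N * (z - R) ^ N * (fj r j z * u j + gj r j z * v j)
         = (z ^ N * (z - R) ^ N * fj r j z) * u j + (z ^ N * (z - R) ^ N * gj r j z) * v j"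
        by (simp add: algebra_simps)
      also have "\<dots> = ((z - R) ^ (N + 1) * z ^ (N - j)) * u j + (z ^ (N + 1) * (z - R) ^ (N - j)) * v j"
        by (simp only: fj[OF j] gj[OF j])
      finally show "z ^ N * (z - R) ^ N * (fj r j z * u j + gj r j z * v j)
         = u j * ((z - R) ^ (N + 1) * z ^ (N - j)) + v j * (z ^ (N + 1) * (z - R) ^ (N - j))"
        by (simp only: mult.commute)
    qed
    have "\<Psi> z = z ^ N * (z - R) ^ N * (p * z + q + (\<Sum>j\<in>{1..N}. fj r j z * u j + gj r j z * v j))"
      unfolding \<Psi>_def distrib_left[of "z ^ N * (z - R) ^ N" "p * z + q"] sum_distrib_left s ..
    then show ?thesis using Suc.prems[OF z] by (simp add: N_def)
  qed
  have all0: "\<Psi> w = 0" for w by (rule poly_vanish[OF r hol van])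
  have pz: "(0::complex) ^ (N - j) = (if j = N then 1 else 0)" if "j \<in> {1..N}" for j
    using that by auto
  have z0N: "(0::complex) ^ N = 0" by (simp add: N_def)
  have "\<Psi> 0 = (\<Sum>j\<in>{1..N}. u j * ((0 - R) ^ (N + 1) * 0 ^ (N - j)) + v j * (0 ^ (N + 1) * (0 - R) ^ (N - j)))"
    unfolding \<Psi>_def z0N by simp
  also have "\<dots> = (\<Sum>j\<in>{1..N}. u j * ((- R) ^ (N + 1) * (if j = N then 1 else 0)))"
    by (rule sum.cong[OF refl]) (simp add: pz)
  also have "\<dots> = (\<Sum>j\<in>{1..N}. if j = N then u N * (- R) ^ (N + 1) else 0)"
    by (rule sum.cong) auto
  also have "\<dots> = u N * (- R) ^ (N + 1)"
    by (subst sum.delta) (auto simp: N_def)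
  finally have uN: "u N = 0" using all0[of 0] R0 by simp
  have pz2: "(R - R) ^ (N - j) = (if j = N then 1 else 0)" if "j \<in> {1..N}" for j
    using that by auto
  have z0N': "(R - R) ^ N = 0" by (simp add: N_def)
  have "\<Psi> R = (\<Sum>j\<in>{1..N}. u j * ((R - R) ^ (N + 1) * R ^ (N - j)) + v j * (R ^ (N + 1) * (R - R) ^ (N - j)))"
    unfolding \<Psi>_def z0N' by simp
  also have "\<dots> = (\<Sum>j\<in>{1..N}. v j * (R ^ (N + 1) * (if j = N then 1 else 0)))"
    by (rule sum.cong[OF refl]) (simp add: pz2 del: diff_self)
  also have "\<dots> = (\<Sum>j\<in>{1..N}. if j = N then v N * R ^ (N + 1) else 0)"
    by (rule sum.cong) auto
  also have "\<dots> = v N * R ^ (N + 1)"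
    by (subst sum.delta) (auto simp: N_def)
  finally have vN: "v N = 0" using all0[of R] R0 by simp
  have "p = 0 \<and> q = 0 \<and> (\<forall>j\<in>{1..n}. u j = 0 \<and> v j = 0)"
  proof (rule Suc.IH)
    fix z :: complex assume "cmod z > 4 * r"
    then show "p * z + q + (\<Sum>j\<in>{1..n}. fj r j z * u j + gj r j z * v j) = 0"
      using Suc.prems[of z] uN vN by (simp add: N_def)
  qed
  then show ?case using uN vN by (auto simp: N_def le_Suc_eq)
qed

definition frefl :: "complex fps \<Rightarrow> complex fps" where
  "frefl F = Abs_fps (\<lambda>k. (-1) ^ k * fps_nth F k)"

lemma frefl_nth [simp]: "fps_nth (frefl F) k = (-1) ^ k * fps_nth F k"
  by (simp add: frefl_def)

lemma neg1_split: "i \<le> k \<Longrightarrow> ((-1)::complex) ^ k = (-1) ^ i * (-1) ^ (k - i)"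
  by (simp add: power_add[symmetric])

lemma frefl_mult: "frefl (F * G) = frefl F * frefl G"
proof (rule fps_ext)
  fix k
  show "fps_nth (frefl (F * G)) k = fps_nth (frefl F * frefl G) k"
    unfolding frefl_nth fps_mult_nth sum_distrib_left
    by (rule sum.cong[OF refl]) (simp add: neg1_split[of _ k] mult_ac)
qed

lemma frefl_add: "frefl (F + G) = frefl F + frefl G"
  by (rule fps_ext) (simp add: algebra_simps)

lemma frefl_diff: "frefl (F - G) = frefl F - frefl G"
  by (rule fps_ext) (simp add: algebra_simps)

lemma frefl_uminus: "frefl (- F) = - frefl F"
  by (rule fps_ext) simp

lemma frefl_const: "frefl (fps_const c) = fps_const c"
  by (rule fps_ext) simp

lemma frefl_frefl: "frefl (frefl F) = F"
  by (rule fps_ext) (simp add: power_mult_distrib[symmetric])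

lemma odd_vanish:
  fixes A Y B :: "nat \<Rightarrow> complex" and lam w :: complex
  assumes lw: "lam \<noteq> 0" "w \<noteq> 0" and Y0: "Y 0 = lam / w"
    and eq: "\<And>k. cprod A (cprod (\<lambda>k. Y k + B k) (\<lambda>k. Y k + (-1) ^ k * Y k)) k
              = lam * (cprod Y Y k - (if k = 0 then 1 else 0))"
    and k: "odd k"
  shows "cprod A (\<lambda>k. Y k + B k) k - lam * Y k = 0"
proof -
  have cp: "cprod S T k = fps_nth (Abs_fps S * Abs_fps T) k" for S T :: "nat \<Rightarrow> complex" and k
    by (simp add: cprod_def fps_mult_nth atLeast0AtMost)
  define a where "a = Abs_fps A"
  define y where "y = Abs_fps Y"
  define b where "b = Abs_fps B"
  define h where "h = frefl y"
  have h: "Abs_fps (\<lambda>k. Y k + (-1) ^ k * Y k) = y + h"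
    by (rule fps_ext) (simp add: y_def h_def)
  have yb: "Abs_fps (\<lambda>k. Y k + B k) = y + b" by (rule fps_ext) (simp add: y_def b_def)
  have E: "a * ((y + b) * (y + h)) = fps_const lam * (y * y - 1)"
  proof (rule fps_ext)
    fix k
    have "fps_nth (a * ((y + b) * (y + h))) k = cprod A (cprod (\<lambda>k. Y k + B k) (\<lambda>k. Y k + (-1) ^ k * Y k)) k"
      unfolding cp a_def by (simp add: h[symmetric] yb[symmetric] cp[symmetric] fps_mult_nth cprod_def atLeast0AtMost)
    also have "\<dots> = fps_nth (fps_const lam * (y * y - 1)) k"
      unfolding eq by (simp add: y_def cp)
    finally show "fps_nth (a * ((y + b) * (y + h))) k = fps_nth (fps_const lam * (y * y - 1)) k" .
  qed
  define P where "P = y + h"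
  define D where "D = a * (y + b) - fps_const lam * y + fps_const (lam * lam / w)"
  have DP: "D * P = - fps_const lam - fps_const lam * (y * h) + fps_const (lam * lam / w) * P"
  proof -
    have "D * P = a * ((y + b) * (y + h)) - fps_const lam * (y * (y + h)) + fps_const (lam * lam / w) * P"
      unfolding D_def P_def by (simp add: algebra_simps)
    also have "\<dots> = - fps_const lam - fps_const lam * (y * h) + fps_const (lam * lam / w) * P"
      unfolding E by (simp add: algebra_simps)
    finally show ?thesis .
  qed
  have rP: "frefl P = P" unfolding P_def h_def frefl_add frefl_frefl by (simp add: add.commute)
  have ryh: "frefl (y * h) = y * h" unfolding h_def frefl_mult frefl_frefl by (simp add: mult.commute)
  have "frefl (D * P) = D * P"
    unfolding DP
    by (simp only: frefl_add frefl_diff frefl_uminus frefl_mult[of "fps_const lam"]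
        frefl_mult[of "fps_const (lam * lam / w)"] frefl_const ryh rP)
  then have "(frefl D - D) * P = 0" unfolding frefl_mult rP by (simp add: algebra_simps)
  moreover have "P \<noteq> 0"
  proof
    assume "P = 0"
    then have "fps_nth P 0 = 0" by simp
    then show False using Y0 lw by (simp add: P_def h_def y_def)
  qed
  ultimately have "frefl D = D" by simp
  then have "fps_nth (frefl D) k = fps_nth D k" by simp
  then have "fps_nth D k = 0" using k by simp
  moreover have "fps_nth D k = cprod A (\<lambda>k. Y k + B k) k - lam * Y k"
    using k unfolding D_def cp a_def yb[symmetric] by (auto simp: y_def)
  ultimately show ?thesis by simp
qed

lemma cprod_add_right: "cprod a (\<lambda>m. b m + c m) k = cprod a b k + cprod a c k"
  by (simp add: cprod_def distrib_left sum.distrib)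

lemma cprod_scale_right: "cprod a (\<lambda>m. z * b m) k = z * cprod a b k"
  by (simp add: cprod_def sum_distrib_left mult_ac)

lemma cprod_sum_right: "cprod a (\<lambda>m. \<Sum>j\<in>J. b j m) k = (\<Sum>j\<in>J. cprod a (b j) k)"
  by (simp add: cprod_def sum_distrib_left sum.swap[of _ J])

lemma cprod_delta_right: "cprod a (\<lambda>m. if m = 0 then c else 0) k = a k * c"
proof -
  have "cprod a (\<lambda>m. if m = 0 then c else 0) k = (\<Sum>i\<le>k. if i = k then a k * c else 0)"
    unfolding cprod_def by (rule sum.cong) auto
  then show ?thesis by simp
qed

lemma cprod_of_real:
  "cprod (\<lambda>m. complex_of_real (a m)) (\<lambda>m. complex_of_real (b m)) k = complex_of_real (cprod a b k)"
  by (simp add: cprod_def)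

lemma cprod_local: "(\<And>m. m \<le> k \<Longrightarrow> b m = b' m) \<Longrightarrow> cprod a b k = cprod a b' k"
  unfolding cprod_def by (rule sum.cong) auto

lemma shiftsum_f:
  fixes z :: complex and s :: "nat \<Rightarrow> complex"
  assumes "z \<noteq> 0" "n \<ge> 1"
  shows "(\<Sum>j\<in>{1..n}. z * fj r j z * s j)
       = (z - of_real (4 * r)) * s 1 + (\<Sum>j\<in>{1..n}. fj r j z * s (Suc j)) - fj r n z * s (Suc n)"
  using assms(2)
proof (induction n)
  case 0 then show ?case by simp
next
  case (Suc n)
  show ?case
  proof (cases "n = 0")
    case True
    have "z * fj r 1 z = z - of_real (4 * r)" using assms(1) by (simp add: fj_def)
    then show ?thesis using True by simp
  next
    case False
    then have IH: "(\<Sum>j\<in>{1..n}. z * fj r j z * s j)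
       = (z - of_real (4 * r)) * s 1 + (\<Sum>j\<in>{1..n}. fj r j z * s (Suc j)) - fj r n z * s (Suc n)"
      using Suc.IH by simp
    have key: "z * fj r (Suc n) z * s (Suc n) = fj r n z * s (Suc n)" using assms(1) by (simp add: fj_def)
    have "(\<Sum>j\<in>{1..Suc n}. z * fj r j z * s j) = (\<Sum>j\<in>{1..n}. z * fj r j z * s j) + z * fj r (Suc n) z * s (Suc n)"
      by simp
    also have "\<dots> = (z - of_real (4 * r)) * s 1 + (\<Sum>j\<in>{1..n}. fj r j z * s (Suc j))"
      unfolding IH key by simp
    also have "\<dots> = (z - of_real (4 * r)) * s 1 + (\<Sum>j\<in>{1..Suc n}. fj r j z * s (Suc j)) - fj r (Suc n) z * s (Suc (Suc n))"
      by simp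
    finally show ?thesis .
  qed
qed

lemma shiftsum_g:
  fixes z :: complex and s :: "nat \<Rightarrow> complex"
  assumes "z \<noteq> of_real (4 * r)" "n \<ge> 1"
  shows "(\<Sum>j\<in>{1..n}. z * gj r j z * s j)
       = z * s 1 + of_real (4 * r) * (\<Sum>j\<in>{1..n}. gj r j z * s j)
         + (\<Sum>j\<in>{1..n}. gj r j z * s (Suc j)) - gj r n z * s (Suc n)"
  using assms(2)
proof (induction n)
  case 0 then show ?case by simp
next
  case (Suc n)
  have nz: "z - of_real (4 * r) \<noteq> 0" using assms(1) by simp
  show ?case
  proof (cases "n = 0")
    case True
    have "z * gj r 1 z = z + of_real (4 * r) * gj r 1 z" using nz by (simp add: gj_def field_simps)
    then show ?thesis using True by (simp add: algebra_simps)
  next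
    case False
    then have IH: "(\<Sum>j\<in>{1..n}. z * gj r j z * s j)
       = z * s 1 + of_real (4 * r) * (\<Sum>j\<in>{1..n}. gj r j z * s j)
         + (\<Sum>j\<in>{1..n}. gj r j z * s (Suc j)) - gj r n z * s (Suc n)"
      using Suc.IH by simp
    have key: "z * gj r (Suc n) z * s (Suc n) = gj r n z * s (Suc n) + of_real (4 * r) * gj r (Suc n) z * s (Suc n)"
      using nz by (simp add: gj_def field_simps)
    have "(\<Sum>j\<in>{1..Suc n}. z * gj r j z * s j) = (\<Sum>j\<in>{1..n}. z * gj r j z * s j) + z * gj r (Suc n) z * s (Suc n)"
      by simp
    also have "\<dots> = z * s 1 + of_real (4 * r) * ((\<Sum>j\<in>{1..n}. gj r j z * s j) + gj r (Suc n) z * s (Suc n))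
         + (\<Sum>j\<in>{1..n}. gj r j z * s (Suc j))"
      unfolding IH key by (simp add: algebra_simps)
    also have "\<dots> = z * s 1 + of_real (4 * r) * (\<Sum>j\<in>{1..Suc n}. gj r j z * s j)
         + (\<Sum>j\<in>{1..Suc n}. gj r j z * s (Suc j)) - gj r (Suc n) z * s (Suc (Suc n))"
      by simp
    finally show ?thesis .
  qed
qed

lemma smooth_ofr: "open I \<Longrightarrow> smooth_on I h \<Longrightarrow> smooth_on I (\<lambda>y. complex_of_real (h y))"
  by (rule smooth_linear[OF _ _ bounded_linear_of_real])

lemma smooth_cmul: "open I \<Longrightarrow> smooth_on I h \<Longrightarrow> smooth_on I (\<lambda>y. (p::complex) * h y)"
  by (rule smooth_linear[OF _ _ bounded_linear_mult_right])

lemma sshift_ofr: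
  assumes "open I" "x \<in> I" "\<And>m. smooth_on I (h m)"
  shows "sshift \<sigma> c (\<lambda>m y. complex_of_real (h m y)) k x = complex_of_real (sshift \<sigma> c h k x)"
  by (rule sshift_linear[OF assms bounded_linear_of_real])

lemma sshift_cmul:
  assumes "open I" "x \<in> I" "\<And>m. smooth_on I (h m)"
  shows "sshift \<sigma> c (\<lambda>m y. (p::complex) * h m y) k x = p * sshift \<sigma> c h k x"
  by (rule sshift_linear[OF assms bounded_linear_mult_right])

lemma sshift_pofr:
  assumes "open I" "x \<in> I" "\<And>m. smooth_on I (h m)"
  shows "sshift \<sigma> c (\<lambda>m y. (p::complex) * complex_of_real (h m y)) k x = p * complex_of_real (sshift \<sigma> c h k x)"
proof -
  have s: "\<And>m. smooth_on I (\<lambda>y. complex_of_real (h m y))" by (rule smooth_ofr[OF assms(1) assms(3)])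
  show ?thesis
    using sshift_cmul[OF assms(1,2) s] sshift_ofr[OF assms] by simp
qed

lemma sshift_rep:
  fixes h0 :: "nat \<Rightarrow> real \<Rightarrow> real" and h1 h2 :: "nat \<Rightarrow> nat \<Rightarrow> real \<Rightarrow> real"
  assumes I: "open I" "x \<in> I" and J: "finite J" and s0: "\<And>m. smooth_on I (h0 m)"
    and s1: "\<And>j m. j \<in> J \<Longrightarrow> smooth_on I (h1 j m)" and s2: "\<And>j m. j \<in> J \<Longrightarrow> smooth_on I (h2 j m)"
  shows "sshift \<sigma> c (\<lambda>m y. cw * ((if m = 0 then d else 0) + complex_of_real (h0 m y)
      + (\<Sum>j\<in>J. p j * complex_of_real (h1 j m y) + q j * complex_of_real (h2 j m y)))) k x
   = cw * ((if k = 0 then d else 0) + complex_of_real (sshift \<sigma> c h0 k x)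
      + (\<Sum>j\<in>J. p j * complex_of_real (sshift \<sigma> c (h1 j) k x) + q j * complex_of_real (sshift \<sigma> c (h2 j) k x)))"
proof -
  define T where "T = (\<lambda>j m y. p j * complex_of_real (h1 j m y) + q j * complex_of_real (h2 j m y))"
  define C where "C = (\<lambda>m (y::real). (if m = 0 then d else 0) + complex_of_real (h0 m y))"
  have sT1: "\<And>j m. j \<in> J \<Longrightarrow> smooth_on I (\<lambda>y. p j * complex_of_real (h1 j m y))"
    by (rule smooth_cmul[OF I(1)], rule smooth_ofr[OF I(1)], rule s1)
  have sT2: "\<And>j m. j \<in> J \<Longrightarrow> smooth_on I (\<lambda>y. q j * complex_of_real (h2 j m y))"
    by (rule smooth_cmul[OF I(1)], rule smooth_ofr[OF I(1)], rule s2)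
  have sT: "\<And>j m. j \<in> J \<Longrightarrow> smooth_on I (T j m)"
    unfolding T_def by (rule smooth_add[OF I(1) sT1 sT2])
  have sS: "\<And>m. smooth_on I (\<lambda>y. \<Sum>j\<in>J. T j m y)"
    by (rule conjunct2[OF D_sum[OF I(1) J _ I(2)]], rule sT)
  have sC: "\<And>m. smooth_on I (C m)"
    unfolding C_def by (rule smooth_add[OF I(1) smooth_const smooth_ofr[OF I(1) s0]])
  have sG: "\<And>m. smooth_on I (\<lambda>y. C m y + (\<Sum>j\<in>J. T j m y))"
    by (rule smooth_add[OF I(1) sC sS])
  have "sshift \<sigma> c (\<lambda>m y. cw * (C m y + (\<Sum>j\<in>J. T j m y))) k x
      = cw * sshift \<sigma> c (\<lambda>m y. C m y + (\<Sum>j\<in>J. T j m y)) k x"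
    by (rule sshift_cmul[OF I sG])
  also have "sshift \<sigma> c (\<lambda>m y. C m y + (\<Sum>j\<in>J. T j m y)) k x
      = sshift \<sigma> c C k x + sshift \<sigma> c (\<lambda>m y. \<Sum>j\<in>J. T j m y) k x"
    by (rule sshift_add[OF I sC sS])
  also have "sshift \<sigma> c C k x = (if k = 0 then d else 0) + complex_of_real (sshift \<sigma> c h0 k x)"
  proof -
    have "sshift \<sigma> c C k x = sshift \<sigma> c (\<lambda>m y. (if m = 0 then d else 0)) k x
        + sshift \<sigma> c (\<lambda>m y. complex_of_real (h0 m y)) k x"
      unfolding C_def by (rule sshift_add[OF I smooth_const smooth_ofr[OF I(1) s0]])
    then show ?thesis by (simp add: sshift_const sshift_ofr[OF I s0])
  qed
  also have "sshift \<sigma> c (\<lambda>m y. \<Sum>j\<in>J. T j m y) k x = (\<Sum>j\<in>J. sshift \<sigma> c (T j) k x)"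
    by (rule sshift_sum[OF I J sT])
  also have "(\<Sum>j\<in>J. sshift \<sigma> c (T j) k x)
     = (\<Sum>j\<in>J. p j * complex_of_real (sshift \<sigma> c (h1 j) k x) + q j * complex_of_real (sshift \<sigma> c (h2 j) k x))"
  proof (rule sum.cong[OF refl])
    fix j assume j: "j \<in> J"
    have "sshift \<sigma> c (T j) k x = sshift \<sigma> c (\<lambda>m y. p j * complex_of_real (h1 j m y)) k x
        + sshift \<sigma> c (\<lambda>m y. q j * complex_of_real (h2 j m y)) k x"
      unfolding T_def by (rule sshift_add[OF I sT1[OF j] sT2[OF j]])
    then show "sshift \<sigma> c (T j) k x = p j * complex_of_real (sshift \<sigma> c (h1 j) k x) + q j * complex_of_real (sshift \<sigma> c (h2 j) k x)"
      using sshift_pofr[OF I s1[OF j]] sshift_pofr[OF I s2[OF j]] by simp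
  qed
  finally show ?thesis unfolding C_def T_def .
qed

lemma sshift_minus_const:
  assumes "open I" "x \<in> I" "\<And>m. smooth_on I (F m)"
  shows "sshift \<sigma> c (\<lambda>m y. F m y - C m) k x = sshift \<sigma> c F k x - (\<sigma> ^ k) *\<^sub>R C k"
proof -
  have e: "sshift \<sigma> c (\<lambda>m y. F m y + (- C m)) k x = sshift \<sigma> c F k x + sshift \<sigma> c (\<lambda>m y. - C m) k x"
    by (rule sshift_add[OF assms smooth_const])
  then show ?thesis by (simp add: sshift_const)
qed

lemma smooth_sum:
  assumes "open I" "finite A" "\<And>i. i \<in> A \<Longrightarrow> smooth_on I (f i)"
  shows "smooth_on I (\<lambda>y. \<Sum>i\<in>A. f i y)"
  using assms(2,3)
proof (induction A rule: finite_induct)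
  case empty then show ?case by (simp add: smooth_const)
next
  case (insert a A)
  then show ?case using smooth_add[OF assms(1), of "f a" "\<lambda>y. \<Sum>i\<in>A. f i y"] by simp
qed

lemma smooth_rep:
  fixes h0 :: "real \<Rightarrow> real" and h1 h2 :: "nat \<Rightarrow> real \<Rightarrow> real"
  assumes I: "open I" and J: "finite J" and s0: "smooth_on I h0"
    and s1: "\<And>j. j \<in> J \<Longrightarrow> smooth_on I (h1 j)" and s2: "\<And>j. j \<in> J \<Longrightarrow> smooth_on I (h2 j)"
  shows "smooth_on I (\<lambda>y. cw * (d + complex_of_real (h0 y)
      + (\<Sum>j\<in>J. p j * complex_of_real (h1 j y) + q j * complex_of_real (h2 j y))))"
proof -
  have sT: "\<And>j. j \<in> J \<Longrightarrow> smooth_on I (\<lambda>y. p j * complex_of_real (h1 j y) + q j * complex_of_real (h2 j y))"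
    by (rule smooth_add[OF I], (rule smooth_cmul[OF I], rule smooth_ofr[OF I], simp add: s1 s2)+)
  have sS: "smooth_on I (\<lambda>y. \<Sum>j\<in>J. p j * complex_of_real (h1 j y) + q j * complex_of_real (h2 j y))"
    by (rule smooth_sum[OF I J sT])
  show ?thesis
    by (rule smooth_cmul[OF I], rule smooth_add[OF I _ sS], rule smooth_add[OF I smooth_const smooth_ofr[OF I s0]])
qed

theorem proposition2:
  fixes r :: real and I :: "real set"
    and a :: "nat \<Rightarrow> real \<Rightarrow> real"
    and V :: "nat \<Rightarrow> complex \<Rightarrow> real \<Rightarrow> complex"
    and V0 :: "nat \<Rightarrow> real \<Rightarrow> real"
    and V0j :: "nat \<Rightarrow> nat \<Rightarrow> real \<Rightarrow> real"
    and V1j :: "nat \<Rightarrow> nat \<Rightarrow> real \<Rightarrow> real"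
  assumes r_pos: "r > 0"
    and I_interval: "is_interval I" "open I" "I \<noteq> {}"
    and a0: "a 0 = (\<lambda>_. r)"
    and a_smooth: "\<And>k. smooth_on I (a k)"
    and V0_smooth: "\<And>k. smooth_on I (V0 k)"
    and V0j_smooth: "\<And>j k. j \<ge> 1 \<Longrightarrow> smooth_on I (V0j j k)"
    and V1j_smooth: "\<And>j k. j \<ge> 1 \<Longrightarrow> smooth_on I (V1j j k)"
    and V0_O: "\<And>x. x \<in> I \<Longrightarrow> V0 0 x = 0"
    and V0j_O: "\<And>j k x. j \<ge> 1 \<Longrightarrow> k < 2 * j \<Longrightarrow> x \<in> I \<Longrightarrow> V0j j k x = 0"
    and V1j_O: "\<And>j k x. j \<ge> 1 \<Longrightarrow> k < 2 * j \<Longrightarrow> x \<in> I \<Longrightarrow> V1j j k x = 0"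
    and V_zero: "\<And>lam x. cmod lam > 4 * r \<Longrightarrow> x \<in> I \<Longrightarrow> V 0 lam x = lam / wc r lam"
    and V_repr: "\<And>k lam x. cmod lam > 4 * r \<Longrightarrow> x \<in> I \<Longrightarrow>
        V k lam x = (1 / wc r lam) * ((if k = 0 then lam else 0) + complex_of_real (V0 k x)
          + (\<Sum>j\<in>{1..k}. fj r j lam * complex_of_real (V0j j k x)
                          + gj r j lam * complex_of_real (V1j j k x)))"
    and V_eq: "\<And>lam x. cmod lam > 4 * r \<Longrightarrow> x \<in> I \<Longrightarrow>
        cprod (\<lambda>k. complex_of_real (a k x))
          (cprod (\<lambda>k. V k lam x + sshift (-1) (-1) (\<lambda>k. V k lam) k x)
                 (\<lambda>k. V k lam x + sshift (-1) 1 (\<lambda>k. V k lam) k x))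
        = (\<lambda>k. lam * (cprod (\<lambda>k. V k lam x) (\<lambda>k. V k lam x) k - (if k = 0 then 1 else 0)))"
  shows "\<forall>x\<in>I.
      even_series (\<lambda>k. sshift 1 (-1/2) V0 k x + sshift 1 (-1/2) (V0j 1) k x
                        + sshift 1 (-1/2) (V1j 1) k x - 2 * sshift 1 (-1/2) a k x)
    \<and> even_series (\<lambda>k. 4 * r * sshift 1 (-1/2) (V0j 1) k x
          + cprod (\<lambda>k. sshift 1 (-1/2) a k x)
                  (\<lambda>k. sshift 1 (-1/2) V0 k x + sshift (-1) (-3/2) V0 k x) k)
    \<and> (\<forall>j\<ge>1. even_series (\<lambda>k. sshift 1 (-1/2) (V0j (j + 1)) k x
          - cprod (\<lambda>k. sshift 1 (-1/2) a k x)
                  (\<lambda>k. sshift 1 (-1/2) (V0j j) k x + sshift (-1) (-3/2) (V0j j) k x) k))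
    \<and> (\<forall>j\<ge>1. even_series (\<lambda>k. 4 * r * sshift 1 (-1/2) (V1j j) k x
          + sshift 1 (-1/2) (V1j (j + 1)) k x
          - cprod (\<lambda>k. sshift 1 (-1/2) a k x)
                  (\<lambda>k. sshift 1 (-1/2) (V1j j) k x + sshift (-1) (-3/2) (V1j j) k x) k))"

proof -
  have Io: "open I" using I_interval(2) .
  define R where "R = complex_of_real (4 * r)"
  have lamfacts: "lam \<noteq> 0 \<and> lam \<noteq> R \<and> wc r lam \<noteq> 0" if "cmod lam > 4 * r" for lam
  proof -
    have l0: "lam \<noteq> 0" using that r_pos by auto
    have lR: "lam \<noteq> R" using that r_pos by (auto simp: R_def)
    have "1 - complex_of_real (4 * r) / lam \<noteq> 0"
      using lR l0 by (auto simp: R_def field_simps)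
    then have "csqrt (1 - complex_of_real (4 * r) / lam) \<noteq> 0" by simp
    then show ?thesis using l0 lR by (simp add: wc_def)
  qed
  have Vsm: "smooth_on I (V m lam)" if "cmod lam > 4 * r" for m lam
  proof -
    have "smooth_on I (\<lambda>y. (1 / wc r lam) * ((if m = 0 then lam else 0) + complex_of_real (V0 m y)
        + (\<Sum>j\<in>{1..m}. fj r j lam * complex_of_real (V0j j m y) + gj r j lam * complex_of_real (V1j j m y))))"
      by (rule smooth_rep[OF Io finite_atLeastAtMost V0_smooth]) (auto intro: V0j_smooth V1j_smooth)
    then show ?thesis
      by (rule smooth_eq_open[OF Io]) (simp add: V_repr[OF that])
  qed
  have Vrep: "V m lam y = (1 / wc r lam) * ((if m = 0 then lam else 0) + complex_of_real (V0 m y)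
        + (\<Sum>j\<in>{1..N}. fj r j lam * complex_of_real (V0j j m y) + gj r j lam * complex_of_real (V1j j m y)))"
    if "cmod lam > 4 * r" "y \<in> I" "m \<le> N" for m N lam y
  proof -
    have "(\<Sum>j\<in>{1..m}. fj r j lam * complex_of_real (V0j j m y) + gj r j lam * complex_of_real (V1j j m y))
        = (\<Sum>j\<in>{1..N}. fj r j lam * complex_of_real (V0j j m y) + gj r j lam * complex_of_real (V1j j m y))"
    proof (rule sum.mono_neutral_left)
      show "\<forall>j\<in>{1..N} - {1..m}. fj r j lam * complex_of_real (V0j j m y) + gj r j lam * complex_of_real (V1j j m y) = 0"
        using V0j_O V1j_O that(2) by auto
    qed (use that in auto)
    then show ?thesis using V_repr[OF that(1,2), of m] by simp
  qed
  have zero_hi0: "sshift \<sigma> c (V0j j) m x = 0 \<and> sshift \<sigma> c (V1j j) m x = 0"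
    if "x \<in> I" "m < 2 * j" "j \<ge> 1" for x \<sigma> c m j
    using sshift_zero[OF Io that(1), of m "V0j j" \<sigma> c] sshift_zero[OF Io that(1), of m "V1j j" \<sigma> c]
      V0j_O V1j_O that by auto
  define C1 where "C1 = (\<lambda>x k. sshift 1 (-1/2) V0 k x + sshift 1 (-1/2) (V0j 1) k x
                        + sshift 1 (-1/2) (V1j 1) k x - 2 * sshift 1 (-1/2) a k x)"
  define C2 where "C2 = (\<lambda>x k. 4 * r * sshift 1 (-1/2) (V0j 1) k x
          + cprod (\<lambda>k. sshift 1 (-1/2) a k x)
                  (\<lambda>k. sshift 1 (-1/2) V0 k x + sshift (-1) (-3/2) V0 k x) k)"
  define C3 where "C3 = (\<lambda>x j k. sshift 1 (-1/2) (V0j (j + 1)) k x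
          - cprod (\<lambda>k. sshift 1 (-1/2) a k x)
                  (\<lambda>k. sshift 1 (-1/2) (V0j j) k x + sshift (-1) (-3/2) (V0j j) k x) k)"
  define C4 where "C4 = (\<lambda>x j k. 4 * r * sshift 1 (-1/2) (V1j j) k x
          + sshift 1 (-1/2) (V1j (j + 1)) k x
          - cprod (\<lambda>k. sshift 1 (-1/2) a k x)
                  (\<lambda>k. sshift 1 (-1/2) (V1j j) k x + sshift (-1) (-3/2) (V1j j) k x) k)"
  have main: "complex_of_real (- C1 x k) * lam + complex_of_real (C2 x k)
     + (\<Sum>j\<in>{1..k}. fj r j lam * complex_of_real (- C3 x j k) + gj r j lam * complex_of_real (- C4 x j k)) = 0"
    if x: "x \<in> I" and k: "odd k" and lam: "cmod lam > 4 * r" for x k lam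
  proof -
    from lamfacts[OF lam] have l0: "lam \<noteq> 0" and lR: "lam \<noteq> R" and w0: "wc r lam \<noteq> 0" by auto
    define w where "w = wc r lam"
    define Vs where "Vs = (\<lambda>m. V m lam)"
    have sV: "\<And>m. smooth_on I (Vs m)" unfolding Vs_def by (rule Vsm[OF lam])
    define Y where "Y = (\<lambda>m. sshift 1 (-1/2) Vs m x)"
    define B where "B = (\<lambda>m. sshift (-1) (-3/2) Vs m x)"
    define A where "A = (\<lambda>m. complex_of_real (sshift 1 (-1/2) a m x))"
    have Y0: "Y 0 = lam / w"
      unfolding Y_def w_def Vs_def by (simp add: sshift_def V_zero[OF lam x])
    have eqs: "cprod A (cprod (\<lambda>k. Y k + B k) (\<lambda>k. Y k + (-1) ^ k * Y k)) k'
         = lam * (cprod Y Y k' - (if k' = 0 then 1 else 0))" for k'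
    proof -
      define M where "M = (\<lambda>m y. Vs m y + sshift (-1) (-1) Vs m y)"
      define P where "P = (\<lambda>m y. Vs m y + sshift (-1) 1 Vs m y)"
      define ar where "ar = (\<lambda>m y. complex_of_real (a m y))"
      define inn where "inn = (\<lambda>m y. cprod (\<lambda>k. M k y) (\<lambda>k. P k y) m)"
      have sS1: "\<And>m. smooth_on I (sshift (-1) (-1) Vs m)" by (rule conjunct2[OF D_sshift[OF Io x sV]])
      have sS2: "\<And>m. smooth_on I (sshift (-1) 1 Vs m)" by (rule conjunct2[OF D_sshift[OF Io x sV]])
      have sM: "\<And>m. smooth_on I (M m)" unfolding M_def by (rule smooth_add[OF Io sV sS1])
      have sP: "\<And>m. smooth_on I (P m)" unfolding P_def by (rule smooth_add[OF Io sV sS2])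
      have sar: "\<And>m. smooth_on I (ar m)" unfolding ar_def by (rule smooth_ofr[OF Io a_smooth])
      have sinn: "\<And>m. smooth_on I (inn m)" unfolding inn_def by (rule smooth_cprod[OF Io sM sP])
      have sVV: "\<And>m. smooth_on I (\<lambda>y. cprod (\<lambda>k. Vs k y) (\<lambda>k. Vs k y) m)" by (rule smooth_cprod[OF Io sV sV])
      have sCC: "\<And>m. smooth_on I (\<lambda>y. cprod (\<lambda>k. Vs k y) (\<lambda>k. Vs k y) m - (if m = 0 then 1 else 0))"
      proof -
        fix m
        have "smooth_on I (\<lambda>y. cprod (\<lambda>k. Vs k y) (\<lambda>k. Vs k y) m + - (if m = 0 then 1 else 0))"
          by (rule smooth_add[OF Io sVV smooth_const])
        then show "smooth_on I (\<lambda>y. cprod (\<lambda>k. Vs k y) (\<lambda>k. Vs k y) m - (if m = 0 then 1 else 0))"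
          by simp
      qed
      have VE: "cprod (\<lambda>k. ar k y) (\<lambda>k. inn k y) m
          = lam * (cprod (\<lambda>k. Vs k y) (\<lambda>k. Vs k y) m - (if m = 0 then 1 else 0))" if "y \<in> I" for y m
        using fun_cong[OF V_eq[OF lam that], of m]
        by (simp add: ar_def inn_def M_def P_def Vs_def)
      have "sshift 1 (-1/2) (\<lambda>m y. cprod (\<lambda>k. ar k y) (\<lambda>k. inn k y) m) k' x
          = sshift 1 (-1/2) (\<lambda>m y. lam * (cprod (\<lambda>k. Vs k y) (\<lambda>k. Vs k y) m - (if m = 0 then 1 else 0))) k' x"
        by (rule sshift_local[OF Io x]) (simp add: VE)
      moreover have "sshift 1 (-1/2) (\<lambda>m y. cprod (\<lambda>k. ar k y) (\<lambda>k. inn k y) m) k' x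
          = cprod (\<lambda>k. sshift 1 (-1/2) ar k x) (\<lambda>k. sshift 1 (-1/2) inn k x) k'"
        by (rule sshift_cprod[OF Io x sar sinn])
      moreover have "\<And>m. sshift 1 (-1/2) ar m x = A m"
        unfolding ar_def A_def by (rule sshift_ofr[OF Io x a_smooth])
      moreover have "\<And>m. sshift 1 (-1/2) inn m x = cprod (\<lambda>k. sshift 1 (-1/2) M k x) (\<lambda>k. sshift 1 (-1/2) P k x) m"
        unfolding inn_def by (rule sshift_cprod[OF Io x sM sP])
      moreover have "\<And>m. sshift 1 (-1/2) M m x = Y m + B m"
      proof -
        fix m
        have "sshift 1 (-1/2) M m x = Y m + sshift 1 (-1/2) (\<lambda>k. sshift (-1) (-1) Vs k) m x"
          unfolding M_def Y_def by (rule sshift_add[OF Io x sV sS1])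
        also have "sshift 1 (-1/2) (\<lambda>k. sshift (-1) (-1) Vs k) m x = sshift (1 * -1) (-1/2 + 1 * -1) Vs m x"
          by (rule sshift_comp[OF Io x sV])
        finally show "sshift 1 (-1/2) M m x = Y m + B m" unfolding B_def by simp
      qed
      moreover have "\<And>m. sshift 1 (-1/2) P m x = Y m + (-1) ^ m * Y m"
      proof -
        fix m
        have "sshift 1 (-1/2) P m x = Y m + sshift 1 (-1/2) (\<lambda>k. sshift (-1) 1 Vs k) m x"
          unfolding P_def Y_def by (rule sshift_add[OF Io x sV sS2])
        also have "sshift 1 (-1/2) (\<lambda>k. sshift (-1) 1 Vs k) m x = sshift (1 * -1) (-1/2 + 1 * 1) Vs m x"
          by (rule sshift_comp[OF Io x sV])
        also have "\<dots> = sshift (-1) (1/2) Vs m x" by simp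
        also have "\<dots> = ((-1) ^ m) *\<^sub>R Y m" unfolding Y_def by (rule sshift_reflect)
        finally show "sshift 1 (-1/2) P m x = Y m + (-1) ^ m * Y m" by (simp add: scaleR_conv_of_real)
      qed
      moreover have "sshift 1 (-1/2) (\<lambda>m y. lam * (cprod (\<lambda>k. Vs k y) (\<lambda>k. Vs k y) m - (if m = 0 then 1 else 0))) k' x
          = lam * (cprod Y Y k' - (if k' = 0 then 1 else 0))"
      proof -
        have "sshift 1 (-1/2) (\<lambda>m y. lam * (cprod (\<lambda>k. Vs k y) (\<lambda>k. Vs k y) m - (if m = 0 then 1 else 0))) k' x
            = lam * sshift 1 (-1/2) (\<lambda>m y. cprod (\<lambda>k. Vs k y) (\<lambda>k. Vs k y) m - (if m = 0 then 1 else 0)) k' x"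
          by (rule sshift_cmul[OF Io x sCC])
        also have "sshift 1 (-1/2) (\<lambda>m y. cprod (\<lambda>k. Vs k y) (\<lambda>k. Vs k y) m - (if m = 0 then 1 else 0)) k' x
            = sshift 1 (-1/2) (\<lambda>m y. cprod (\<lambda>k. Vs k y) (\<lambda>k. Vs k y) m) k' x - (1 ^ k') *\<^sub>R (if k' = 0 then 1 else 0)"
          by (rule sshift_minus_const[OF Io x sVV])
        also have "sshift 1 (-1/2) (\<lambda>m y. cprod (\<lambda>k. Vs k y) (\<lambda>k. Vs k y) m) k' x = cprod Y Y k'"
          unfolding Y_def by (rule sshift_cprod[OF Io x sV sV])
        finally show ?thesis by simp
      qed
      ultimately show ?thesis by simp
    qed
    have ov: "cprod A (\<lambda>k. Y k + B k) k - lam * Y k = 0"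
      by (rule odd_vanish[OF l0 _ Y0 eqs k]) (simp add: w_def w0)
    define s0 where "s0 = (\<lambda>m. sshift 1 (-1/2) V0 m x)"
    define t0 where "t0 = (\<lambda>m. sshift (-1) (-3/2) V0 m x)"
    define sA where "sA = (\<lambda>j m. sshift 1 (-1/2) (V0j j) m x)"
    define tA where "tA = (\<lambda>j m. sshift (-1) (-3/2) (V0j j) m x)"
    define sB where "sB = (\<lambda>j m. sshift 1 (-1/2) (V1j j) m x)"
    define tB where "tB = (\<lambda>j m. sshift (-1) (-3/2) (V1j j) m x)"
    define sa where "sa = (\<lambda>m. sshift 1 (-1/2) a m x)"
    have shrep: "sshift \<sigma> c Vs m x = (1 / w) * ((if m = 0 then lam else 0) + complex_of_real (sshift \<sigma> c V0 m x)
        + (\<Sum>j\<in>{1..k}. fj r j lam * complex_of_real (sshift \<sigma> c (V0j j) m x)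
                       + gj r j lam * complex_of_real (sshift \<sigma> c (V1j j) m x)))" if m: "m \<le> k" for \<sigma> c m
    proof -
      have "sshift \<sigma> c Vs m x = sshift \<sigma> c (\<lambda>m y. (1 / w) * ((if m = 0 then lam else 0) + complex_of_real (V0 m y)
        + (\<Sum>j\<in>{1..k}. fj r j lam * complex_of_real (V0j j m y) + gj r j lam * complex_of_real (V1j j m y)))) m x"
      proof (rule sshift_local[OF Io x])
        fix m' y assume m': "m' \<le> m" and y: "y \<in> I"
        then show "Vs m' y = (1 / w) * ((if m' = 0 then lam else 0) + complex_of_real (V0 m' y)
          + (\<Sum>j\<in>{1..k}. fj r j lam * complex_of_real (V0j j m' y) + gj r j lam * complex_of_real (V1j j m' y)))"
          using Vrep[where m=m' and N=k, OF lam y] m by (simp add: Vs_def w_def)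
      qed
      also have "\<dots> = (1 / w) * ((if m = 0 then lam else 0) + complex_of_real (sshift \<sigma> c V0 m x)
        + (\<Sum>j\<in>{1..k}. fj r j lam * complex_of_real (sshift \<sigma> c (V0j j) m x)
                       + gj r j lam * complex_of_real (sshift \<sigma> c (V1j j) m x)))"
        by (rule sshift_rep[OF Io x finite_atLeastAtMost V0_smooth]) (auto intro: V0j_smooth V1j_smooth)
      finally show ?thesis .
    qed
    have YB: "Y m + B m = (1 / w) * ((if m = 0 then 2 * lam else 0) + complex_of_real (s0 m + t0 m)
        + (\<Sum>j\<in>{1..k}. fj r j lam * complex_of_real (sA j m + tA j m)
                       + gj r j lam * complex_of_real (sB j m + tB j m)))" if m: "m \<le> k" for m
      unfolding Y_def B_def shrep[OF m] s0_def t0_def sA_def tA_def sB_def tB_def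
      by (simp add: sum.distrib algebra_simps)
    have Yk: "Y k = (1 / w) * (complex_of_real (s0 k)
        + (\<Sum>j\<in>{1..k}. fj r j lam * complex_of_real (sA j k) + gj r j lam * complex_of_real (sB j k)))"
      using k unfolding Y_def shrep[OF order_refl] s0_def sA_def sB_def by (auto elim: oddE)
    have CP: "cprod A (\<lambda>k. Y k + B k) k = (1 / w) * (complex_of_real (sa k) * (2 * lam)
        + complex_of_real (cprod sa (\<lambda>m. s0 m + t0 m) k)
        + (\<Sum>j\<in>{1..k}. fj r j lam * complex_of_real (cprod sa (\<lambda>m. sA j m + tA j m) k)
                       + gj r j lam * complex_of_real (cprod sa (\<lambda>m. sB j m + tB j m) k)))"
    proof -
      have "cprod A (\<lambda>k. Y k + B k) k = cprod A (\<lambda>m. (1 / w) * ((if m = 0 then 2 * lam else 0) + complex_of_real (s0 m + t0 m)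
        + (\<Sum>j\<in>{1..k}. fj r j lam * complex_of_real (sA j m + tA j m)
                       + gj r j lam * complex_of_real (sB j m + tB j m)))) k"
        by (rule cprod_local) (rule YB)
      also have "\<dots> = (1 / w) * (A k * (2 * lam) + cprod A (\<lambda>m. complex_of_real (s0 m + t0 m)) k
        + (\<Sum>j\<in>{1..k}. fj r j lam * cprod A (\<lambda>m. complex_of_real (sA j m + tA j m)) k
                       + gj r j lam * cprod A (\<lambda>m. complex_of_real (sB j m + tB j m)) k))"
        by (simp only: cprod_scale_right cprod_add_right cprod_sum_right cprod_delta_right)
      also have "\<dots> = (1 / w) * (complex_of_real (sa k) * (2 * lam)
        + complex_of_real (cprod sa (\<lambda>m. s0 m + t0 m) k)
        + (\<Sum>j\<in>{1..k}. fj r j lam * complex_of_real (cprod sa (\<lambda>m. sA j m + tA j m) k)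
                       + gj r j lam * complex_of_real (cprod sa (\<lambda>m. sB j m + tB j m) k)))"
        unfolding A_def sa_def by (simp only: cprod_of_real)
      finally show ?thesis .
    qed
    have k1: "k \<ge> 1" using k by (cases k) auto
    have sAk: "sA (Suc k) k = 0" "sB (Suc k) k = 0"
      using zero_hi0[OF x, of k "Suc k"] unfolding sA_def sB_def by auto
    have SF: "(\<Sum>j\<in>{1..k}. lam * fj r j lam * complex_of_real (sA j k))
       = (lam - R) * complex_of_real (sA 1 k) + (\<Sum>j\<in>{1..k}. fj r j lam * complex_of_real (sA (Suc j) k))"
      using shiftsum_f[OF l0 k1, of r "\<lambda>j. complex_of_real (sA j k)"] sAk by (simp add: R_def)
    have SG: "(\<Sum>j\<in>{1..k}. lam * gj r j lam * complex_of_real (sB j k))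
       = lam * complex_of_real (sB 1 k) + R * (\<Sum>j\<in>{1..k}. gj r j lam * complex_of_real (sB j k))
         + (\<Sum>j\<in>{1..k}. gj r j lam * complex_of_real (sB (Suc j) k))"
      using shiftsum_g[of lam r k "\<lambda>j. complex_of_real (sB j k)"] lR k1 sAk by (simp add: R_def)
    have "complex_of_real (- C1 x k) * lam + complex_of_real (C2 x k)
     + (\<Sum>j\<in>{1..k}. fj r j lam * complex_of_real (- C3 x j k) + gj r j lam * complex_of_real (- C4 x j k))
      = w * (cprod A (\<lambda>k. Y k + B k) k - lam * Y k)"
    proof -
      have "w * (cprod A (\<lambda>k. Y k + B k) k - lam * Y k)
        = complex_of_real (sa k) * (2 * lam)
        + complex_of_real (cprod sa (\<lambda>m. s0 m + t0 m) k)
        + (\<Sum>j\<in>{1..k}. fj r j lam * complex_of_real (cprod sa (\<lambda>m. sA j m + tA j m) k)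
                       + gj r j lam * complex_of_real (cprod sa (\<lambda>m. sB j m + tB j m) k))
        - lam * complex_of_real (s0 k)
        - (\<Sum>j\<in>{1..k}. lam * fj r j lam * complex_of_real (sA j k))
        - (\<Sum>j\<in>{1..k}. lam * gj r j lam * complex_of_real (sB j k))"
        unfolding CP Yk using w0 by (simp add: w_def field_simps sum.distrib sum_distrib_left)
      also have "\<dots> = complex_of_real (- C1 x k) * lam + complex_of_real (C2 x k)
         + (\<Sum>j\<in>{1..k}. fj r j lam * complex_of_real (- C3 x j k) + gj r j lam * complex_of_real (- C4 x j k))"
      proof -
        have c1: "C1 x k = s0 k + sA 1 k + sB 1 k - 2 * sa k"
          by (simp add: C1_def s0_def sA_def sB_def sa_def)
        have c2: "C2 x k = 4 * r * sA 1 k + cprod sa (\<lambda>m. s0 m + t0 m) k"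
          by (simp add: C2_def s0_def t0_def sA_def sa_def)
        have c3: "\<And>j. C3 x j k = sA (Suc j) k - cprod sa (\<lambda>m. sA j m + tA j m) k"
          by (simp add: C3_def sA_def tA_def sa_def)
        have c4: "\<And>j. C4 x j k = 4 * r * sB j k + sB (Suc j) k - cprod sa (\<lambda>m. sB j m + tB j m) k"
          by (simp add: C4_def sB_def tB_def sa_def)
        show ?thesis
          unfolding SF SG c1 c2 c3 c4 R_def
          by (simp add: algebra_simps sum.distrib sum_subtractf sum_distrib_left)
      qed
      finally show ?thesis by simp
    qed
    then show ?thesis using ov by simp
  qed
  have zero_hi: "sshift \<sigma> c (V0j j) m x = 0 \<and> sshift \<sigma> c (V1j j) m x = 0"
    if "x \<in> I" "m < 2 * j" "j \<ge> 1" for x \<sigma> c m j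
    using sshift_zero[OF Io that(1), of m "V0j j" \<sigma> c] sshift_zero[OF Io that(1), of m "V1j j" \<sigma> c]
      V0j_O V1j_O that by auto
  have L: "C1 x k = 0 \<and> C2 x k = 0 \<and> (\<forall>j\<in>{1..k}. C3 x j k = 0 \<and> C4 x j k = 0)"
    if x: "x \<in> I" and k: "odd k" for x k
  proof -
    have "complex_of_real (- C1 x k) = 0 \<and> complex_of_real (C2 x k) = 0 \<and>
      (\<forall>j\<in>{1..k}. complex_of_real (- C3 x j k) = 0 \<and> complex_of_real (- C4 x j k) = 0)"
      by (rule lam_unique[OF r_pos main[OF x k]])
    then show ?thesis by simp
  qed
  have Hi: "C3 x j k = 0 \<and> C4 x j k = 0" if x: "x \<in> I" and jk: "k < j" for x j k
  proof -
    have z: "sshift \<sigma> c (V0j j) m x = 0 \<and> sshift \<sigma> c (V1j j) m x = 0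
           \<and> sshift \<sigma> c (V0j (j + 1)) m x = 0 \<and> sshift \<sigma> c (V1j (j + 1)) m x = 0" if "m \<le> k" for m \<sigma> c
      using zero_hi[OF x, of m j] zero_hi[OF x, of m "j + 1"] that jk by auto
    have c0: "cprod f (\<lambda>m. g m + h m) k = 0" if "\<And>m. m \<le> k \<Longrightarrow> g m = 0 \<and> h m = 0"
      for f g h :: "nat \<Rightarrow> real"
      unfolding cprod_def using that by (auto intro!: sum.neutral)
    show ?thesis unfolding C3_def C4_def using z[of k] c0 z by simp
  qed
  show ?thesis
  proof (intro ballI conjI allI impI)
    fix x assume x: "x \<in> I"
    show "even_series (\<lambda>k. sshift 1 (-1/2) V0 k x + sshift 1 (-1/2) (V0j 1) k x
                        + sshift 1 (-1/2) (V1j 1) k x - 2 * sshift 1 (-1/2) a k x)"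
      unfolding even_series_def using L[OF x] by (simp add: C1_def)
    show "even_series (\<lambda>k. 4 * r * sshift 1 (-1/2) (V0j 1) k x
          + cprod (\<lambda>k. sshift 1 (-1/2) a k x)
                  (\<lambda>k. sshift 1 (-1/2) V0 k x + sshift (-1) (-3/2) V0 k x) k)"
      unfolding even_series_def using L[OF x] by (simp add: C2_def)
    fix j :: nat assume j: "j \<ge> 1"
    have A: "C3 x j k = 0 \<and> C4 x j k = 0" if "odd k" for k
    proof (cases "j \<le> k")
      case True then show ?thesis using L[OF x that] j by auto
    next
      case False then show ?thesis using Hi[OF x] by simp
    qed
    show "even_series (\<lambda>k. sshift 1 (-1/2) (V0j (j + 1)) k x
          - cprod (\<lambda>k. sshift 1 (-1/2) a k x)
                  (\<lambda>k. sshift 1 (-1/2) (V0j j) k x + sshift (-1) (-3/2) (V0j j) k x) k)"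
      unfolding even_series_def using A by (simp add: C3_def)
    show "even_series (\<lambda>k. 4 * r * sshift 1 (-1/2) (V1j j) k x
          + sshift 1 (-1/2) (V1j (j + 1)) k x
          - cprod (\<lambda>k. sshift 1 (-1/2) a k x)
                  (\<lambda>k. sshift 1 (-1/2) (V1j j) k x + sshift (-1) (-3/2) (V1j j) k x) k)"
      unfolding even_series_def using A by (simp add: C4_def)
  qed
qed

end
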